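(* Let $\Omega\subseteq\mathbb{R}^2$ be a bounded, simply connected domain of class $C^1$, let $a_1,\ldots,a_p$ be distinct points in $\Omega$, and let $\{L_1,\ldots,L_q\}$ be a minimal connection for $\{a_1,\ldots,a_p\}$ relative to $\Omega$. Then the segments $L_j$ are pairwise disjoint; for each index $i$ with $a_i\in\Omega$ there is exactly one index $j$ such that $a_i$ is an endpoint of $L_j$; and for each $j$ the intersection $L_j\cap\partial\Omega$ is either empty or an endpoint of $L_j$.
   Context: A connection for $\{a_1,\ldots,a_p\}$ relative to $\Omega$ is a finite collection $\{L_1,\ldots,L_q\}$ of closed non-degenerate straight line segments such that (i) each $L_j\subseteq\overline\Omega$; (ii) each $L_j$ either connects two of $a_1,\ldots,a_p$ or connects some $a_i$ with a point of $\partial\Omega$; (iii) each $a_i$ is an endpoint of an odd number of the $L_j$. A minimal connection relative to $\Omega$ is one minimising $\sum_j\mathcal{H}^1(L_j)$ among all connections relative to $\Omega$. *)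

theory Defs
  imports "HOL-Analysis.Analysis"
begin

text \<open>The plane R^2 is modelled by the type complex.\<close>

text \<open>Bounded C^1 domain: open set whose boundary is locally (after a rigid
rotation/translation) the graph of a C^1 function, with the set lying below the graph.\<close>
definition C1_domain :: "complex set \<Rightarrow> bool" where
  "C1_domain \<Omega> \<longleftrightarrow> open \<Omega> \<and> connected \<Omega> \<and>
     (\<forall>p \<in> frontier \<Omega>. \<exists>u r g. cmod u = 1 \<and> r > 0 \<and> g C1_differentiable_on UNIV \<and>
        (\<forall>z. cmod (z - p) < r \<longrightarrow>
           (z \<in> \<Omega> \<longleftrightarrow> Im (u * (z - p)) < g (Re (u * (z - p))))))"

definition seg_endpoint :: "complex \<Rightarrow> complex set \<Rightarrow> bool" where
  "seg_endpoint x S \<longleftrightarrow> (\<exists>y. y \<noteq> x \<and> S = closed_segment x y)"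

definition is_connection :: "complex set \<Rightarrow> complex set \<Rightarrow> complex set set \<Rightarrow> bool" where
  "is_connection \<Omega> A C \<longleftrightarrow> finite C \<and>
     (\<forall>L \<in> C. \<exists>x y. x \<noteq> y \<and> L = closed_segment x y \<and> L \<subseteq> closure \<Omega> \<and>
        x \<in> A \<and> (y \<in> A \<or> y \<in> frontier \<Omega>)) \<and>
     (\<forall>a \<in> A. odd (card {L \<in> C. seg_endpoint a L}))"

text \<open>The H^1 measure of a segment is its length, i.e. its diameter.\<close>
definition connection_length :: "complex set set \<Rightarrow> real" where
  "connection_length C = (\<Sum>L\<in>C. diameter L)"

definition is_minimal_connection :: "complex set \<Rightarrow> complex set \<Rightarrow> complex set set \<Rightarrow> bool" where
  "is_minimal_connection \<Omega> A C \<longleftrightarrow> is_connection \<Omega> A C \<and>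
     (\<forall>C'. is_connection \<Omega> A C' \<longrightarrow> connection_length C \<le> connection_length C')"

end

theory Submission
  imports Defs
begin

lemma diam_seg: "diameter (closed_segment x (y::complex)) = dist x y"
proof (rule antisym)
  show "diameter (closed_segment x y) \<le> dist x y"
  proof (rule diameter_le)
    show "closed_segment x y \<noteq> {} \<or> 0 \<le> dist x y" by simp
    fix u v assume "u \<in> closed_segment x y" "v \<in> closed_segment x y"
    then obtain s t where s: "s \<in> {0..1}" "u = (1 - s) *\<^sub>R x + s *\<^sub>R y"
      and t: "t \<in> {0..1}" "v = (1 - t) *\<^sub>R x + t *\<^sub>R y"
      unfolding closed_segment_def by auto
    have "u - v = (t - s) *\<^sub>R (x - y)" unfolding s(2) t(2) by (simp add: algebra_simps)
    hence "norm (u - v) = \<bar>t - s\<bar> * norm (x - y)" by simp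
    also have "\<dots> \<le> 1 * norm (x - y)"
      by (rule mult_right_mono) (use s t in auto)
    finally show "norm (u - v) \<le> dist x y" by (simp add: dist_norm)
  qed
  show "dist x y \<le> diameter (closed_segment x y)"
    by (rule diameter_bounded_bound) (auto simp: compact_imp_bounded)
qed

lemma seg_endpoint_iff:
  assumes "x \<noteq> (y::complex)"
  shows "seg_endpoint a (closed_segment x y) \<longleftrightarrow> a = x \<or> a = y"
proof
  assume "seg_endpoint a (closed_segment x y)"
  then obtain b where "b \<noteq> a" "closed_segment x y = closed_segment a b"
    unfolding seg_endpoint_def by auto
  hence "{x,y} = {a,b}" by simp
  thus "a = x \<or> a = y" by auto
next
  assume "a = x \<or> a = y"
  thus "seg_endpoint a (closed_segment x y)"
    unfolding seg_endpoint_def using assms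
    by (metis closed_segment_commute)
qed

definition flip :: "'a \<Rightarrow> 'a set \<Rightarrow> 'a set" where
  "flip N S = (if N \<in> S then S - {N} else insert N S)"

lemma card_flip:
  assumes "finite S"
  shows "odd (card {L \<in> flip N S. P L}) \<longleftrightarrow> (odd (card {L \<in> S. P L}) \<noteq> P N)"
proof (cases "N \<in> S")
  case True
  have "{L \<in> flip N S. P L} = {L \<in> S. P L} - {N}" using True by (auto simp: flip_def)
  moreover have "finite {L \<in> S. P L}" using assms by simp
  ultimately show ?thesis using True
    by (cases "P N") (auto simp: card_Diff_singleton_if)
next
  case False
  have "{L \<in> flip N S. P L} = (if P N then insert N {L \<in> S. P L} else {L \<in> S. P L})"
    using False by (auto simp: flip_def)
  moreover have "finite {L \<in> S. P L}" using assms by simp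
  ultimately show ?thesis using False by auto
qed

lemma sum_flip:
  fixes f :: "'a \<Rightarrow> real"
  assumes "finite S" "f N \<ge> 0"
  shows "sum f (flip N S) \<le> sum f S + f N"
proof (cases "N \<in> S")
  case True
  have "flip N S = S - {N}" using True by (simp add: flip_def)
  moreover have "sum f S = f N + sum f (S - {N})" using sum.remove[OF assms(1) True, of f] .
  ultimately have "sum f (flip N S) = sum f S - f N" by simp
  thus ?thesis using assms(2) by linarith
next
  case False
  thus ?thesis using assms by (simp add: flip_def add.commute)
qed

lemma seg_dist: "x \<in> closed_segment a (b::complex) \<longleftrightarrow> dist a b = dist a x + dist x b"
  using between between_mem_segment by blast

definition cnt :: "complex \<Rightarrow> complex set set \<Rightarrow> nat" where
  "cnt x S = card {L \<in> S. seg_endpoint x L}"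

definition np :: "complex \<Rightarrow> complex set list \<Rightarrow> bool" where
  "np x Ns = odd (length (filter (seg_endpoint x) Ns))"

lemma np_append[simp]: "np x (Ns @ Ms) = (np x Ns \<noteq> np x Ms)"
  by (auto simp: np_def)
lemma np_Nil[simp]: "np x [] = False" by (simp add: np_def)
lemma np_Cons[simp]: "np x (N # Ns) = (seg_endpoint x N \<noteq> np x Ns)"
  by (auto simp: np_def)



lemma deriv_bound:
  fixes g :: "real \<Rightarrow> real"
  assumes "g C1_differentiable_on UNIV"
  obtains K \<delta> where "K > 0" "\<delta> > 0" "\<And>t. \<bar>t\<bar> < \<delta> \<Longrightarrow> \<bar>g t - g 0\<bar> \<le> K * \<bar>t\<bar>"
proof -
  obtain D where "(g has_vector_derivative D) (at 0)"
    using assms unfolding C1_differentiable_on_def by blast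
  hence "(g has_real_derivative D) (at 0)"
    by (simp add: has_real_derivative_iff_has_vector_derivative)
  hence "((\<lambda>y. (g y - g 0) / (y - 0)) \<longlongrightarrow> D) (at 0)"
    by (simp add: has_field_derivative_iff)
  from LIM_D[OF this, of 1] obtain s where s: "s > 0" "\<And>t. t \<noteq> 0 \<and> norm (t - 0) < s \<Longrightarrow> norm ((g t - g 0) / (t - 0) - D) < 1"
    by auto
  have "\<bar>g t - g 0\<bar> \<le> (\<bar>D\<bar> + 1) * \<bar>t\<bar>" if "\<bar>t\<bar> < s" for t
  proof (cases "t = 0")
    case True thus ?thesis by simp
  next
    case False
    hence "\<bar>(g t - g 0) / t - D\<bar> < 1" using s that by auto
    hence "\<bar>(g t - g 0) / t\<bar> \<le> \<bar>D\<bar> + 1" by linarith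
    hence "\<bar>g t - g 0\<bar> / \<bar>t\<bar> \<le> \<bar>D\<bar> + 1" by (simp add: abs_divide)
    thus ?thesis using False by (simp add: divide_le_eq)
  qed
  thus ?thesis using that[of "\<bar>D\<bar> + 1" s] s by auto
qed

lemma tangent_ball_dir:
  fixes g :: "real \<Rightarrow> real" and e :: complex
  assumes g: "g C1_differentiable_on UNIV" and g0: "g 0 \<le> 0" and r: "r > 0" and e: "e \<noteq> 0"
    and B: "\<And>\<zeta>. cmod \<zeta> < r \<Longrightarrow> cmod (\<zeta> - e) < cmod e \<Longrightarrow> Im \<zeta> < g (Re \<zeta>)"
  shows "Im e < 0"
proof (rule ccontr)
  assume "\<not> Im e < 0"
  hence ie: "Im e \<ge> 0" by simp
  show False
  proof (cases "Im e > 0")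
    case True
    define s where "s = min (Im e) (r/2)"
    have s: "s > 0" "s \<le> Im e" "s < r" using True r by (auto simp: s_def)
    have "cmod (Complex 0 s) < r" using s by (simp add: complex_norm)
    moreover have "cmod (Complex 0 s - e) < cmod e"
    proof -
      have "(cmod (Complex 0 s - e))\<^sup>2 = (Re e)\<^sup>2 + (s - Im e)\<^sup>2"
        unfolding cmod_power2 by (simp add: power2_eq_square algebra_simps)
      also have "\<dots> < (Re e)\<^sup>2 + (Im e)\<^sup>2"
      proof -
        have "(Im e - s)\<^sup>2 < (Im e)\<^sup>2"
          by (rule power_strict_mono) (use s in auto)
        thus ?thesis by (simp add: power2_commute)
      qed
      also have "\<dots> = (cmod e)\<^sup>2" by (simp add: cmod_power2)
      finally show ?thesis by (simp add: power_less_imp_less_base)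
    qed
    ultimately have "s < g 0" using B[of "Complex 0 s"] by simp
    thus False using s g0 by simp
  next
    case False
    hence ie0: "Im e = 0" using ie by simp
    define \<rho> where "\<rho> = \<bar>Re e\<bar>"
    define \<epsilon> where "\<epsilon> = sgn (Re e)"
    have rho: "\<rho> > 0" using e ie0 by (auto simp: \<rho>_def complex_eq_iff)
    have eps: "\<epsilon> * \<epsilon> = 1" "Re e = \<epsilon> * \<rho>" "\<bar>\<epsilon>\<bar> = 1"
      using rho by (auto simp: \<epsilon>_def \<rho>_def sgn_if)
    obtain K \<delta> where K: "K > 0" "\<delta> > 0" "\<And>t. \<bar>t\<bar> < \<delta> \<Longrightarrow> \<bar>g t - g 0\<bar> \<le> K * \<bar>t\<bar>"
      using deriv_bound[OF g] by blast
    define h where "h = Min {\<rho>/2, r/2, r\<^sup>2/(4*\<rho>), \<delta>/2, \<rho>/(2*K\<^sup>2)}"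
    have hpos: "h > 0" using rho r K by (simp add: h_def)
    have h1: "h < \<rho>" "h \<le> r/2" "h \<le> r\<^sup>2/(4*\<rho>)" "h < \<delta>" "h \<le> \<rho>/(2*K\<^sup>2)"
      using rho r K unfolding h_def by auto
    define \<zeta> where "\<zeta> = Complex (\<epsilon> * h) (sqrt (\<rho> * h))"
    have sq: "(sqrt (\<rho> * h))\<^sup>2 = \<rho> * h" using rho hpos by simp
    have "(cmod \<zeta>)\<^sup>2 = h\<^sup>2 + \<rho> * h"
      unfolding \<zeta>_def cmod_power2 using sq eps by (simp add: power2_eq_square)
    also have "\<dots> < r\<^sup>2"
    proof -
      have "h\<^sup>2 \<le> (r/2)\<^sup>2" using h1 hpos by (intro power_mono) auto
      moreover have "\<rho> * h \<le> \<rho> * (r\<^sup>2/(4*\<rho>))" using h1 rho by (intro mult_left_mono) auto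
      moreover have "\<rho> * (r\<^sup>2/(4*\<rho>)) = r\<^sup>2/4" using rho by simp
      moreover have "(r/2)\<^sup>2 = r\<^sup>2/4" by (simp add: power_divide)
      moreover have "r\<^sup>2 > 0" using r by simp
      ultimately show ?thesis by linarith
    qed
    finally have z1: "cmod \<zeta> < r" using r by (simp add: power_less_imp_less_base)
    have "(cmod (\<zeta> - e))\<^sup>2 = (\<epsilon> * h - \<epsilon> * \<rho>)\<^sup>2 + \<rho> * h"
      unfolding \<zeta>_def cmod_power2 using sq eps ie0 by (simp add: power2_eq_square)
    also have "\<dots> = (\<epsilon> * \<epsilon>) * (h - \<rho>)\<^sup>2 + \<rho> * h"
      by (simp add: power2_eq_square algebra_simps)
    also have "\<dots> = (h - \<rho>)\<^sup>2 + \<rho> * h" using eps(1) by simp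
    also have "\<dots> < \<rho>\<^sup>2"
    proof -
      have "(h - \<rho>)\<^sup>2 + \<rho> * h = \<rho>\<^sup>2 + h * (h - \<rho>)" by (simp add: power2_eq_square algebra_simps)
      moreover have "h * (h - \<rho>) < 0" by (rule mult_pos_neg) (use hpos h1 in auto)
      ultimately show ?thesis by linarith
    qed
    also have "\<dots> = (cmod e)\<^sup>2" using ie0 by (simp add: cmod_power2 \<rho>_def)
    finally have z2: "cmod (\<zeta> - e) < cmod e" by (simp add: power_less_imp_less_base)
    have "sqrt (\<rho> * h) < g (\<epsilon> * h)" using B[OF z1 z2] by (simp add: \<zeta>_def)
    hence "sqrt (\<rho> * h) < g (\<epsilon> * h) - g 0" using g0 by simp
    also have "\<dots> \<le> K * \<bar>\<epsilon> * h\<bar>" using K(3)[of "\<epsilon> * h"] h1 hpos eps by (simp add: abs_mult)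
    also have "\<dots> = K * h" using eps hpos by (simp add: abs_mult)
    finally have lt: "sqrt (\<rho> * h) < K * h" .
    hence "(sqrt (\<rho> * h))\<^sup>2 < (K * h)\<^sup>2"
      by (intro power_strict_mono) (use rho hpos in auto)
    hence "\<rho> * h < K\<^sup>2 * h * h" using sq by (simp add: power2_eq_square algebra_simps)
    hence "\<rho> * h < (K\<^sup>2 * h) * h" by (simp add: algebra_simps)
    hence "\<rho> < K\<^sup>2 * h" using hpos by (meson less_imp_le mult_right_less_imp_less)
    moreover have "K\<^sup>2 * h \<le> K\<^sup>2 * (\<rho>/(2*K\<^sup>2))" using h1 by (intro mult_left_mono) auto
    moreover have "K\<^sup>2 * (\<rho>/(2*K\<^sup>2)) = \<rho>/2" using K by simp
    ultimately show False using rho by linarith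
  qed
qed



lemma opp:
  fixes x y z :: complex
  assumes "z \<in> closed_segment x y" "z \<noteq> x" "z \<noteq> y"
  obtains \<mu> where "\<mu> > 0" "y - z = of_real (- \<mu>) * (x - z)"
proof -
  obtain t where t: "0 \<le> t" "t \<le> 1" "z = (1 - t) *\<^sub>R x + t *\<^sub>R y"
    using assms(1) unfolding closed_segment_def by auto
  have t0: "t \<noteq> 0" using t assms by auto
  have t1: "t \<noteq> 1" using t assms by auto
  have e1: "x - z = of_real t * (x - y)" using t by (simp add: scaleR_conv_of_real algebra_simps)
  have e2: "y - z = of_real (1 - t) * (y - x)" using t by (simp add: scaleR_conv_of_real algebra_simps)
  define \<mu> where "\<mu> = (1 - t) / t"
  have "\<mu> > 0" using t t0 t1 by (simp add: \<mu>_def)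
  moreover have "y - z = of_real (- \<mu>) * (x - z)"
  proof -
    have m: "- \<mu> * t = - (1 - t)" using t0 by (simp add: \<mu>_def)
    have "of_real (- \<mu>) * (x - z) = of_real (- \<mu> * t) * (x - y)"
      unfolding e1 by (simp only: of_real_mult mult.assoc)
    also have "\<dots> = of_real (1 - t) * (y - x)" unfolding m by (simp add: algebra_simps)
    finally show ?thesis using e2 by simp
  qed
  ultimately show ?thesis using that by blast
qed

lemma three_opp:
  fixes p x y w :: complex
  assumes "p \<in> closed_segment x y" "p \<in> closed_segment x w" "p \<in> closed_segment y w"
    and "p \<noteq> x" "p \<noteq> y" "p \<noteq> w"
  shows False
proof -
  obtain \<alpha> where a: "\<alpha> > 0" "y - p = of_real (- \<alpha>) * (x - p)" using opp[OF assms(1)] assms by metis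
  obtain \<beta> where b: "\<beta> > 0" "w - p = of_real (- \<beta>) * (x - p)" using opp[OF assms(2)] assms by metis
  obtain \<gamma> where c: "\<gamma> > 0" "w - p = of_real (- \<gamma>) * (y - p)" using opp[OF assms(3)] assms by metis
  have "w - p = of_real (\<gamma> * \<alpha>) * (x - p)"
    unfolding c(2) a(2) by (simp add: of_real_mult mult.assoc)
  hence "of_real (- \<beta>) * (x - p) = of_real (\<gamma> * \<alpha>) * (x - p)"
    using b(2) by simp
  hence "of_real (- \<beta> - \<gamma> * \<alpha>) * (x - p) = 0" by (simp add: algebra_simps)
  moreover have "- \<beta> - \<gamma> * \<alpha> \<noteq> 0" using a b c by (smt (verit) mult_pos_pos)
  ultimately show False using assms
    by (metis mult_eq_0_iff of_real_eq_0_iff right_minus_eq)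
qed


locale mcx =
  fixes \<Omega> A :: "complex set" and C :: "complex set set"
  assumes bnd: "bounded \<Omega>" and c1: "C1_domain \<Omega>" and finA: "finite A"
    and AO: "A \<subseteq> \<Omega>" and minC: "is_minimal_connection \<Omega> A C"
begin

definition valid :: "complex set \<Rightarrow> bool" where
  "valid L \<longleftrightarrow> (\<exists>x y. x \<noteq> y \<and> L = closed_segment x y \<and> L \<subseteq> closure \<Omega> \<and>
        x \<in> A \<and> (y \<in> A \<or> y \<in> frontier \<Omega>))"

lemma opn: "open \<Omega>" using c1 by (simp add: C1_domain_def)
lemma conn: "connected \<Omega>" using c1 by (simp add: C1_domain_def)

lemma finC: "finite C" and validC: "\<And>L. L \<in> C \<Longrightarrow> valid L"
  and oddC: "\<And>a. a \<in> A \<Longrightarrow> odd (cnt a C)"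
  using minC unfolding is_minimal_connection_def is_connection_def valid_def cnt_def by auto

lemma minimal: "is_connection \<Omega> A C' \<Longrightarrow> connection_length C \<le> connection_length C'"
  using minC unfolding is_minimal_connection_def by auto

lemma valid_diam: "valid L \<Longrightarrow> diameter L \<ge> 0"
  unfolding valid_def using diam_seg by auto

lemma F_Omega: "x \<in> frontier \<Omega> \<Longrightarrow> x \<notin> \<Omega>"
  using opn by (simp add: frontier_def interior_open)

lemma F_A: "x \<in> frontier \<Omega> \<Longrightarrow> x \<notin> A"
  using F_Omega AO by auto

lemma F_ne: assumes "a \<in> \<Omega>" shows "frontier \<Omega> \<noteq> {}"
proof
  assume "frontier \<Omega> = {}"
  hence "\<Omega> = UNIV" using assms frontier_eq_empty by auto
  thus False using bnd not_bounded_UNIV by auto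
qed

definition nb :: "complex \<Rightarrow> complex" where
  "nb a = (SOME w. w \<in> frontier \<Omega> \<and> (\<forall>q \<in> frontier \<Omega>. dist a w \<le> dist a q))"

lemma nb: assumes "a \<in> \<Omega>"
  shows "nb a \<in> frontier \<Omega>" "\<And>q. q \<in> frontier \<Omega> \<Longrightarrow> dist a (nb a) \<le> dist a q"
proof -
  obtain w where "w \<in> frontier \<Omega>" "\<And>q. q \<in> frontier \<Omega> \<Longrightarrow> dist a w \<le> dist a q"
    using distance_attains_inf[OF frontier_closed F_ne[OF assms]] by metis
  hence "\<exists>w. w \<in> frontier \<Omega> \<and> (\<forall>q \<in> frontier \<Omega>. dist a w \<le> dist a q)" by blast
  from someI_ex[OF this] show "nb a \<in> frontier \<Omega>" "\<And>q. q \<in> frontier \<Omega> \<Longrightarrow> dist a (nb a) \<le> dist a q"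
    unfolding nb_def by auto
qed

lemma nb_pos: "a \<in> \<Omega> \<Longrightarrow> nb a \<noteq> a"
  using nb(1) F_Omega by metis

lemma ball_nb: assumes "a \<in> \<Omega>" shows "ball a (dist a (nb a)) \<subseteq> \<Omega>"
proof (rule ccontr)
  assume "\<not> ?thesis"
  hence "ball a (dist a (nb a)) - \<Omega> \<noteq> {}" by auto
  moreover have "a \<in> ball a (dist a (nb a))" using nb_pos[OF assms] by simp
  hence "ball a (dist a (nb a)) \<inter> \<Omega> \<noteq> {}" using assms by blast
  ultimately obtain q where "q \<in> ball a (dist a (nb a))" "q \<in> frontier \<Omega>"
    using connected_Int_frontier[OF connected_ball] by blast
  thus False using nb(2)[OF assms] by fastforce
qed

lemma seg_nb: assumes "a \<in> \<Omega>" shows "closed_segment a (nb a) \<subseteq> closure \<Omega>"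
proof -
  have "cball a (dist a (nb a)) \<subseteq> closure \<Omega>"
    using closure_mono[OF ball_nb[OF assms]] nb_pos[OF assms] by simp
  moreover have "closed_segment a (nb a) \<subseteq> cball a (dist a (nb a))"
    by (rule closed_segment_subset) auto
  ultimately show ?thesis by blast
qed

lemma valid_nb: "a \<in> A \<Longrightarrow> valid (closed_segment a (nb a))"
proof -
  assume a: "a \<in> A"
  hence "a \<in> \<Omega>" using AO by auto
  hence "a \<noteq> nb a" "closed_segment a (nb a) \<subseteq> closure \<Omega>" "nb a \<in> frontier \<Omega>"
    using nb(1) nb_pos seg_nb by metis+
  thus ?thesis unfolding valid_def using a by blast
qed

lemma ep_nb: "a \<in> A \<Longrightarrow> x \<in> A \<Longrightarrow> seg_endpoint x (closed_segment a (nb a)) \<longleftrightarrow> x = a"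
proof -
  assume a: "a \<in> A" "x \<in> A"
  hence "a \<in> \<Omega>" using AO by auto
  hence "nb a \<noteq> a" "x \<noteq> nb a" using nb_pos nb(1) F_A a by metis+
  thus ?thesis using seg_endpoint_iff by metis
qed

lemma seg_in_Omega:
  assumes "u \<in> \<Omega>" "closed_segment u v \<inter> frontier \<Omega> = {}"
  shows "closed_segment u v \<subseteq> \<Omega>"
proof (rule ccontr)
  assume "\<not> ?thesis"
  hence h2: "closed_segment u v - \<Omega> \<noteq> {}" by auto
  have h1: "closed_segment u v \<inter> \<Omega> \<noteq> {}" using assms by auto
  from h1 h2 have "closed_segment u v \<inter> frontier \<Omega> \<noteq> {}"
    by (rule connected_Int_frontier[OF connected_segment])
  thus False using assms(2) by simp
qed

lemma fold_flip:
  assumes "finite S" "\<forall>L\<in>S. valid L" "\<forall>N\<in>set Ns. valid N"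
  shows "finite (foldr flip Ns S) \<and> (\<forall>L\<in>foldr flip Ns S. valid L) \<and>
    (\<forall>x. odd (cnt x (foldr flip Ns S)) \<longleftrightarrow> (odd (cnt x S) \<noteq> np x Ns)) \<and>
    connection_length (foldr flip Ns S) \<le> connection_length S + sum_list (map diameter Ns)"
  using assms(3)
proof (induction Ns)
  case Nil
  thus ?case using assms by simp
next
  case (Cons N Ns)
  let ?T = "foldr flip Ns S"
  from Cons have IH: "finite ?T" "\<forall>L\<in>?T. valid L"
    "\<forall>x. odd (cnt x ?T) \<longleftrightarrow> (odd (cnt x S) \<noteq> np x Ns)"
    "connection_length ?T \<le> connection_length S + sum_list (map diameter Ns)" by auto
  have vN: "valid N" using Cons by auto
  have "finite (flip N ?T)" using IH by (auto simp: flip_def)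
  moreover have "\<forall>L\<in>flip N ?T. valid L" using IH vN by (auto simp: flip_def)
  moreover have "\<forall>x. odd (cnt x (flip N ?T)) \<longleftrightarrow> (odd (cnt x S) \<noteq> np x (N # Ns))"
    using IH card_flip[OF IH(1)] unfolding cnt_def by auto
  moreover have "connection_length (flip N ?T) \<le> connection_length S + sum_list (map diameter (N # Ns))"
    using sum_flip[OF IH(1), of diameter N] valid_diam[OF vN] IH(4)
    unfolding connection_length_def by simp
  ultimately show ?case by simp
qed

lemma exchange:
  assumes "R \<subseteq> C" "\<forall>N\<in>set Ns. valid N" "\<forall>x\<in>A. odd (cnt x R) \<longleftrightarrow> np x Ns"
  shows "(\<Sum>L\<in>R. diameter L) \<le> sum_list (map diameter Ns)"
proof -
  let ?S = "C - R"
  have fS: "finite ?S" "\<forall>L\<in>?S. valid L" using finC validC by auto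
  note ff = fold_flip[OF fS assms(2)]
  let ?C' = "foldr flip Ns ?S"
  have finR: "finite R" using assms(1) finC finite_subset by blast
  have cntS: "cnt x C = cnt x ?S + cnt x R" for x
  proof -
    have "{L \<in> C. seg_endpoint x L} = {L \<in> ?S. seg_endpoint x L} \<union> {L \<in> R. seg_endpoint x L}"
      using assms(1) by auto
    moreover have "card ({L \<in> ?S. seg_endpoint x L} \<union> {L \<in> R. seg_endpoint x L}) =
      card {L \<in> ?S. seg_endpoint x L} + card {L \<in> R. seg_endpoint x L}"
      by (rule card_Un_disjoint) (use finC finR in auto)
    ultimately show ?thesis unfolding cnt_def by simp
  qed
  have "is_connection \<Omega> A ?C'"
  proof -
    have "\<forall>a\<in>A. odd (cnt a ?C')"
      using ff assms(3) oddC cntS by auto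
    thus ?thesis using ff unfolding is_connection_def valid_def cnt_def by blast
  qed
  hence "connection_length C \<le> connection_length ?C'" by (rule minimal)
  also have "\<dots> \<le> connection_length ?S + sum_list (map diameter Ns)" using ff by blast
  finally have "connection_length C \<le> connection_length ?S + sum_list (map diameter Ns)" .
  moreover have "connection_length C = connection_length ?S + (\<Sum>L\<in>R. diameter L)"
    unfolding connection_length_def using finC assms(1)
    by (metis add.commute sum.subset_diff)
  ultimately show ?thesis by simp
qed

lemma tangent_contra:
  assumes bx: "ball x (dist x z) \<subseteq> \<Omega>" and byy: "ball y (dist y z) \<subseteq> \<Omega>"
    and zs: "z \<in> closed_segment x y" and zx: "z \<noteq> x" and zy: "z \<noteq> y" and zF: "z \<in> frontier \<Omega>"
  shows False
proof -
  obtain u r g where u: "cmod u = 1" and r: "r > 0" and g: "g C1_differentiable_on UNIV"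
    and H: "\<forall>w. cmod (w - z) < r \<longrightarrow> (w \<in> \<Omega> \<longleftrightarrow> Im (u * (w - z)) < g (Re (u * (w - z))))"
    using c1 zF unfolding C1_domain_def by blast
  have uu: "u * cnj u = 1" by (metis complex_norm_square of_real_1 power_one u)
  have uu2: "cnj u * u = 1" using uu by (simp add: mult.commute)
  have H': "(z + cnj u * \<zeta> \<in> \<Omega> \<longleftrightarrow> Im \<zeta> < g (Re \<zeta>))" if "cmod \<zeta> < r" for \<zeta>
  proof -
    have e: "u * ((z + cnj u * \<zeta>) - z) = \<zeta>" using uu by (simp add: mult.assoc[symmetric])
    have "cmod ((z + cnj u * \<zeta>) - z) = cmod \<zeta>" using u by (simp add: norm_mult)
    thus ?thesis using H that e by metis
  qed
  have "z \<notin> \<Omega>" using F_Omega zF by blast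
  hence g0: "g 0 \<le> 0" using H'[of 0] r by simp
  have dir: "Im (u * (v - z)) < 0" if bv: "ball v (dist v z) \<subseteq> \<Omega>" and vz: "v \<noteq> z" for v
  proof (rule tangent_ball_dir[OF g g0 r])
    show "u * (v - z) \<noteq> 0" using u vz by auto
    fix \<zeta> assume z1: "cmod \<zeta> < r" and z2: "cmod (\<zeta> - u * (v - z)) < cmod (u * (v - z))"
    have "cnj u * (u * (v - z) - \<zeta>) = (cnj u * u) * (v - z) - cnj u * \<zeta>"
      by (simp add: algebra_simps)
    hence "v - (z + cnj u * \<zeta>) = cnj u * (u * (v - z) - \<zeta>)"
      using uu2 by simp
    hence "dist v (z + cnj u * \<zeta>) = cmod (\<zeta> - u * (v - z))"
      using u by (simp add: dist_norm norm_mult norm_minus_commute)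
    also have "\<dots> < cmod (u * (v - z))" by (rule z2)
    also have "\<dots> = dist v z" using u by (simp add: norm_mult dist_norm)
    finally have "z + cnj u * \<zeta> \<in> \<Omega>" using bv by auto
    thus "Im \<zeta> < g (Re \<zeta>)" using H' z1 by blast
  qed
  obtain \<mu> where mu: "\<mu> > 0" "y - z = of_real (- \<mu>) * (x - z)" using opp[OF zs zx zy] by metis
  have i1: "Im (u * (x - z)) < 0" using dir bx zx by auto
  have i2: "Im (u * (y - z)) < 0" using dir byy zy by auto
  have "u * (y - z) = u * (of_real (- \<mu>) * (x - z))" using mu(2) by simp
  also have "\<dots> = of_real (- \<mu>) * (u * (x - z))" by (simp only: mult.left_commute)
  finally have "u * (y - z) = of_real (- \<mu>) * (u * (x - z))" .
  hence "Im (u * (y - z)) = - \<mu> * Im (u * (x - z))" by simp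
  moreover have "- \<mu> * Im (u * (x - z)) > 0" using mu i1 by (intro mult_neg_neg) auto
  ultimately show False using i2 by linarith
qed

lemma link:
  assumes u: "u \<in> A \<union> frontier \<Omega>" and v: "v \<in> A \<union> frontier \<Omega>"
  shows "\<exists>Ns. (\<forall>N\<in>set Ns. valid N) \<and> (\<forall>x\<in>A. np x Ns \<longleftrightarrow> ((x = u) \<noteq> (x = v))) \<and>
           sum_list (map diameter Ns) \<le> dist u v"
proof (cases "u = v")
  case True
  thus ?thesis by (intro exI[of _ "[]"]) auto
next
  case neq: False
  show ?thesis
  proof (cases "u \<in> A")
    case uA: True
    hence uO: "u \<in> \<Omega>" using AO by auto
    show ?thesis
    proof (cases "v \<in> A")
      case vA: True
      hence vO: "v \<in> \<Omega>" using AO by auto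
      show ?thesis
      proof (cases "closed_segment u v \<inter> frontier \<Omega> = {}")
        case True
        have "closed_segment u v \<subseteq> closure \<Omega>"
          using seg_in_Omega[OF uO True] closure_subset by blast
        hence "valid (closed_segment u v)" unfolding valid_def using neq uA vA by blast
        moreover have "\<forall>x\<in>A. np x [closed_segment u v] \<longleftrightarrow> ((x = u) \<noteq> (x = v))"
          using seg_endpoint_iff[OF neq] neq by auto
        ultimately show ?thesis using diam_seg
          by (intro exI[of _ "[closed_segment u v]"]) auto
      next
        case False
        then obtain q where q: "q \<in> closed_segment u v" "q \<in> frontier \<Omega>" by blast
        let ?Ns = "[closed_segment u (nb u), closed_segment v (nb v)]"
        have "\<forall>N\<in>set ?Ns. valid N" using valid_nb uA vA by auto
        moreover have "\<forall>x\<in>A. np x ?Ns \<longleftrightarrow> ((x = u) \<noteq> (x = v))"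
          using ep_nb uA vA by auto
        moreover have "sum_list (map diameter ?Ns) \<le> dist u v"
        proof -
          have "sum_list (map diameter ?Ns) = dist u (nb u) + dist v (nb v)" by (simp add: diam_seg)
          also have "\<dots> \<le> dist u q + dist v q" using nb(2)[OF uO q(2)] nb(2)[OF vO q(2)] by simp
          also have "\<dots> = dist u v" using q(1) seg_dist by (simp add: dist_commute)
          finally show ?thesis .
        qed
        ultimately show ?thesis by blast
      qed
    next
      case vA: False
      hence vF: "v \<in> frontier \<Omega>" using v by auto
      let ?Ns = "[closed_segment u (nb u)]"
      have "\<forall>N\<in>set ?Ns. valid N" using valid_nb uA by auto
      moreover have "\<forall>x\<in>A. np x ?Ns \<longleftrightarrow> ((x = u) \<noteq> (x = v))"
        using ep_nb uA vA by auto
      moreover have "sum_list (map diameter ?Ns) \<le> dist u v"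
        using nb(2)[OF uO vF] by (simp add: diam_seg)
      ultimately show ?thesis by blast
    qed
  next
    case uA: False
    hence uF: "u \<in> frontier \<Omega>" using u by auto
    show ?thesis
    proof (cases "v \<in> A")
      case vA: True
      hence vO: "v \<in> \<Omega>" using AO by auto
      let ?Ns = "[closed_segment v (nb v)]"
      have "\<forall>N\<in>set ?Ns. valid N" using valid_nb vA by auto
      moreover have "\<forall>x\<in>A. np x ?Ns \<longleftrightarrow> ((x = u) \<noteq> (x = v))"
        using ep_nb vA uA by auto
      moreover have "sum_list (map diameter ?Ns) \<le> dist u v"
        using nb(2)[OF vO uF] by (simp add: diam_seg dist_commute)
      ultimately show ?thesis by blast
    next
      case vA: False
      thus ?thesis using uA by (intro exI[of _ "[]"]) auto
    qed
  qed
qed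

lemma segC: "L \<in> C \<Longrightarrow> \<exists>x y. x \<noteq> y \<and> L = closed_segment x y \<and> x \<in> A \<and> (y \<in> A \<or> y \<in> frontier \<Omega>)"
proof -
  assume "L \<in> C"
  hence "valid L" by (rule validC)
  then obtain x y where "x \<noteq> y" "L = closed_segment x y" "x \<in> A" "y \<in> A \<or> y \<in> frontier \<Omega>"
    unfolding valid_def by (elim exE conjE) simp
  thus ?thesis by (intro exI[of _ x] exI[of _ y]) simp
qed

lemma endp:
  assumes "L \<in> C" "seg_endpoint a L"
  shows "\<exists>b. b \<noteq> a \<and> L = closed_segment a b \<and> a \<in> A \<union> frontier \<Omega> \<and> b \<in> A \<union> frontier \<Omega>"
proof -
  obtain x y where xy: "x \<noteq> y" "L = closed_segment x y" "x \<in> A" "y \<in> A \<or> y \<in> frontier \<Omega>"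
    using segC[OF assms(1)] by blast
  hence "a = x \<or> a = y" using seg_endpoint_iff assms(2) by blast
  thus ?thesis
  proof
    assume "a = x" thus ?thesis using xy by (intro exI[of _ y]) auto
  next
    assume "a = y" thus ?thesis using xy closed_segment_commute by (intro exI[of _ x]) auto
  qed
qed

lemma cnt1: "odd (cnt x {L}) \<longleftrightarrow> seg_endpoint x L"
proof (cases "seg_endpoint x L")
  case True
  hence "{La \<in> {L}. seg_endpoint x La} = {L}" by auto
  thus ?thesis unfolding cnt_def using True by simp
next
  case False
  hence e: "{La \<in> {L}. seg_endpoint x La} = {}" by auto
  show ?thesis unfolding cnt_def e using False by simp
qed

lemma cnt2:
  assumes "L1 \<noteq> L2"
  shows "odd (cnt x {L1, L2}) \<longleftrightarrow> (seg_endpoint x L1 \<noteq> seg_endpoint x L2)"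
proof -
  consider "seg_endpoint x L1" "seg_endpoint x L2" | "seg_endpoint x L1" "\<not> seg_endpoint x L2"
    | "\<not> seg_endpoint x L1" "seg_endpoint x L2" | "\<not> seg_endpoint x L1" "\<not> seg_endpoint x L2" by blast
  thus ?thesis
  proof cases
    case 1
    hence "{L \<in> {L1, L2}. seg_endpoint x L} = {L1, L2}" by auto
    thus ?thesis unfolding cnt_def using 1 assms by simp
  next
    case 2
    hence "{L \<in> {L1, L2}. seg_endpoint x L} = {L1}" by auto
    thus ?thesis unfolding cnt_def using 2 assms by simp
  next
    case 3
    hence "{L \<in> {L1, L2}. seg_endpoint x L} = {L2}" by auto
    thus ?thesis unfolding cnt_def using 3 assms by simp
  next
    case 4
    hence e: "{L \<in> {L1, L2}. seg_endpoint x L} = {}" by auto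
    show ?thesis unfolding cnt_def e using 4 by simp
  qed
qed

lemma swap:
  assumes L: "L1 \<in> C" "L2 \<in> C" "L1 \<noteq> L2" "L1 = closed_segment a b" "L2 = closed_segment c d"
    and ne: "a \<noteq> b" "c \<noteq> d"
    and pts: "a \<in> A \<union> frontier \<Omega>" "b \<in> A \<union> frontier \<Omega>" "c \<in> A \<union> frontier \<Omega>" "d \<in> A \<union> frontier \<Omega>"
    and lt: "dist a c + dist b d < dist a b + dist c d"
  shows False
proof -
  obtain N1 where N1: "\<forall>N\<in>set N1. valid N" "\<forall>x\<in>A. np x N1 \<longleftrightarrow> ((x = a) \<noteq> (x = c))"
    "sum_list (map diameter N1) \<le> dist a c" using link[OF pts(1,3)] by blast
  obtain N2 where N2: "\<forall>N\<in>set N2. valid N" "\<forall>x\<in>A. np x N2 \<longleftrightarrow> ((x = b) \<noteq> (x = d))"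
    "sum_list (map diameter N2) \<le> dist b d" using link[OF pts(2,4)] by blast
  have "(\<Sum>L\<in>{L1, L2}. diameter L) \<le> sum_list (map diameter (N1 @ N2))"
  proof (rule exchange)
    show "{L1, L2} \<subseteq> C" using L by auto
    show "\<forall>N\<in>set (N1 @ N2). valid N" using N1 N2 by auto
    show "\<forall>x\<in>A. odd (cnt x {L1, L2}) \<longleftrightarrow> np x (N1 @ N2)"
    proof
      fix x assume x: "x \<in> A"
      have "odd (cnt x {L1, L2}) \<longleftrightarrow> ((x = a \<or> x = b) \<noteq> (x = c \<or> x = d))"
        using cnt2[OF L(3)] seg_endpoint_iff[OF ne(1)] seg_endpoint_iff[OF ne(2)] L(4,5) by simp
      thus "odd (cnt x {L1, L2}) \<longleftrightarrow> np x (N1 @ N2)" using N1(2) N2(2) x ne by auto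
    qed
  qed
  moreover have "(\<Sum>L\<in>{L1, L2}. diameter L) = dist a b + dist c d"
    using L by (simp add: diam_seg)
  ultimately show False using N1(3) N2(3) lt by simp
qed

lemma two_at:
  assumes L: "L1 \<in> C" "L2 \<in> C" "L1 \<noteq> L2" "L1 = closed_segment a b1" "L2 = closed_segment a b2"
    and ne: "a \<noteq> b1" "a \<noteq> b2"
    and pts: "a \<in> A \<union> frontier \<Omega>" "b1 \<in> A \<union> frontier \<Omega>" "b2 \<in> A \<union> frontier \<Omega>"
    and nots: "a \<notin> closed_segment b1 b2"
  shows False
proof -
  have "dist b1 b2 \<noteq> dist b1 a + dist a b2" using nots by (simp add: seg_dist)
  moreover have "dist b1 b2 \<le> dist b1 a + dist a b2" by (rule dist_triangle)
  ultimately have "dist a a + dist b1 b2 < dist a b1 + dist a b2" by (simp add: dist_commute)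
  thus False using swap[OF L ne pts(1,2,1,3)] by blast
qed

lemma uniq:
  assumes aA: "a \<in> A"
  shows "\<exists>!L. L \<in> C \<and> seg_endpoint a L"
proof -
  let ?S = "{L \<in> C. seg_endpoint a L}"
  have finS: "finite ?S" using finC by simp
  have oddS: "odd (card ?S)" using oddC[OF aA] by (simp add: cnt_def)
  hence "?S \<noteq> {}" by (metis card.empty odd_pos less_irrefl)
  then obtain L0 where "L0 \<in> C" "seg_endpoint a L0" by blast
  moreover have "L1 = L2" if h: "L1 \<in> C" "seg_endpoint a L1" "L2 \<in> C" "seg_endpoint a L2" for L1 L2
  proof (rule ccontr)
    assume n12: "L1 \<noteq> L2"
    have "?S - {L1, L2} \<noteq> {}"
    proof
      assume "?S - {L1, L2} = {}"
      hence "?S = {L1, L2}" using h by auto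
      hence "card ?S = 2" using n12 by simp
      thus False using oddS by simp
    qed
    then obtain L3 where L3: "L3 \<in> C" "seg_endpoint a L3" "L3 \<noteq> L1" "L3 \<noteq> L2" by blast
    obtain b1 where b1: "b1 \<noteq> a" "L1 = closed_segment a b1" "a \<in> A \<union> frontier \<Omega>" "b1 \<in> A \<union> frontier \<Omega>"
      using endp[OF h(1,2)] by blast
    obtain b2 where b2: "b2 \<noteq> a" "L2 = closed_segment a b2" "b2 \<in> A \<union> frontier \<Omega>"
      using endp[OF h(3,4)] by blast
    obtain b3 where b3: "b3 \<noteq> a" "L3 = closed_segment a b3" "b3 \<in> A \<union> frontier \<Omega>"
      using endp[OF L3(1,2)] by blast
    have n1: "a \<noteq> b1" and n2: "a \<noteq> b2" and n3: "a \<noteq> b3" using b1 b2 b3 by auto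
    have c12: "a \<in> closed_segment b1 b2"
      using two_at[OF h(1) h(3) n12 b1(2) b2(2) n1 n2 b1(3) b1(4) b2(3)] by blast
    have c13: "a \<in> closed_segment b1 b3"
      using two_at[OF h(1) L3(1) L3(3)[symmetric] b1(2) b3(2) n1 n3 b1(3) b1(4) b3(3)] by blast
    have c23: "a \<in> closed_segment b2 b3"
      using two_at[OF h(3) L3(1) L3(4)[symmetric] b2(2) b3(2) n2 n3 b1(3) b2(3) b3(3)] by blast
    show False using three_opp[OF c12 c13 c23 n1 n2 n3] .
  qed
  ultimately show ?thesis by blast
qed

lemma bnd_seg:
  assumes L: "L \<in> C" "L = closed_segment x y" and x: "x \<in> A" and y: "y \<in> frontier \<Omega>"
  shows "dist x y = dist x (nb x)"
proof (rule ccontr)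
  assume ne: "dist x y \<noteq> dist x (nb x)"
  have xO: "x \<in> \<Omega>" using x AO by auto
  have lt: "dist x (nb x) < dist x y" using nb(2)[OF xO y] ne by simp
  have xy: "x \<noteq> y" using x y F_A by auto
  have "(\<Sum>L\<in>{L}. diameter L) \<le> sum_list (map diameter [closed_segment x (nb x)])"
  proof (rule exchange)
    show "{L} \<subseteq> C" using L by auto
    show "\<forall>N\<in>set [closed_segment x (nb x)]. valid N" using valid_nb x by auto
    show "\<forall>x'\<in>A. odd (cnt x' {L}) \<longleftrightarrow> np x' [closed_segment x (nb x)]"
      using cnt1 seg_endpoint_iff[OF xy] L(2) ep_nb[OF x] F_A[OF y] by auto
  qed
  thus False using lt L(2) by (simp add: diam_seg)
qed

lemma disj:
  assumes L: "L1 \<in> C" "L2 \<in> C" "L1 \<noteq> L2" and p: "p \<in> L1" "p \<in> L2"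
  shows False
proof -
  obtain a b where ab: "a \<noteq> b" "L1 = closed_segment a b" "a \<in> A" "b \<in> A \<or> b \<in> frontier \<Omega>"
    using segC[OF L(1)] by blast
  obtain c d where cd: "c \<noteq> d" "L2 = closed_segment c d" "c \<in> A" "d \<in> A \<or> d \<in> frontier \<Omega>"
    using segC[OF L(2)] by blast
  have pts: "a \<in> A \<union> frontier \<Omega>" "b \<in> A \<union> frontier \<Omega>" "c \<in> A \<union> frontier \<Omega>" "d \<in> A \<union> frontier \<Omega>"
    using ab cd by auto
  have dab: "dist a b = dist a p + dist p b" using p(1) ab(2) by (simp add: seg_dist)
  have dcd: "dist c d = dist c p + dist p d" using p(2) cd(2) by (simp add: seg_dist)
  have s1: "\<not> dist a c + dist b d < dist a b + dist c d"
    using swap[OF L ab(2) cd(2) ab(1) cd(1) pts] by blast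
  have s2: "\<not> dist a d + dist b c < dist a b + dist d c"
    using swap[OF L ab(2) _ ab(1) _ pts(1,2,4,3)] cd closed_segment_commute by metis
  have t1: "dist a c \<le> dist a p + dist p c" "dist b d \<le> dist b p + dist p d"
    "dist a d \<le> dist a p + dist p d" "dist b c \<le> dist b p + dist p c"
    by (rule dist_triangle)+
  have "dist a c = dist a p + dist p c" "dist b d = dist b p + dist p d"
    "dist a d = dist a p + dist p d" "dist b c = dist b p + dist p c"
    using s1 s2 t1 dab dcd dist_commute[of c p] dist_commute[of p b] dist_commute[of d c] by linarith+
  hence pac: "p \<in> closed_segment a c" and pbd: "p \<in> closed_segment b d"
    and pad: "p \<in> closed_segment a d" and pbc: "p \<in> closed_segment b c"
    by (simp_all add: seg_dist)
  have pab: "p \<in> closed_segment a b" and pcd: "p \<in> closed_segment c d" using p ab cd by auto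
  have e1: "p = a \<or> p = b"
  proof (rule ccontr)
    assume n: "\<not> (p = a \<or> p = b)"
    show False
    proof (cases "p = c")
      case True
      hence "p \<noteq> d" using cd by auto
      thus False using three_opp[OF pab pad pbd] n by auto
    next
      case False
      thus False using three_opp[OF pab pac pbc] n by auto
    qed
  qed
  have e2: "p = c \<or> p = d"
  proof (rule ccontr)
    assume n: "\<not> (p = c \<or> p = d)"
    have pca: "p \<in> closed_segment c a" and pda: "p \<in> closed_segment d a"
      and pcb: "p \<in> closed_segment c b" and pdb: "p \<in> closed_segment d b"
      using pac pad pbc pbd closed_segment_commute by blast+
    show False
    proof (cases "p = a")
      case True
      hence "p \<noteq> b" using ab by auto
      thus False using three_opp[OF pcd pcb pdb] n by auto
    next
      case False
      thus False using three_opp[OF pcd pca pda] n by auto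
    qed
  qed
  have ep1: "seg_endpoint p L1" using e1 seg_endpoint_iff[OF ab(1)] ab(2) by blast
  have ep2: "seg_endpoint p L2" using e2 seg_endpoint_iff[OF cd(1)] cd(2) by blast
  show False
  proof (cases "p \<in> A")
    case True
    thus False using uniq[OF True] ep1 ep2 L by blast
  next
    case False
    hence pb: "p = b" and pd: "p = d" using e1 e2 ab cd by auto
    hence pF: "p \<in> frontier \<Omega>" using ab False by auto
    have aO: "a \<in> \<Omega>" and cO: "c \<in> \<Omega>" using ab cd AO by auto
    have "dist a p = dist a (nb a)" using bnd_seg[OF L(1) ab(2) ab(3)] pb pF by simp
    hence ba: "ball a (dist a p) \<subseteq> \<Omega>" using ball_nb[OF aO] by simp
    have "dist c p = dist c (nb c)" using bnd_seg[OF L(2) cd(2) cd(3)] pd pF by simp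
    hence bc: "ball c (dist c p) \<subseteq> \<Omega>" using ball_nb[OF cO] by simp
    have "p \<noteq> a" "p \<noteq> c" using False ab cd by auto
    thus False using tangent_contra[OF ba bc pac _ _ pF] by blast
  qed
qed

lemma bdry:
  assumes L: "L \<in> C"
  shows "L \<inter> frontier \<Omega> = {} \<or> (\<exists>e. seg_endpoint e L \<and> L \<inter> frontier \<Omega> = {e})"
proof -
  obtain x y where xy: "x \<noteq> y" "L = closed_segment x y" "x \<in> A" "y \<in> A \<or> y \<in> frontier \<Omega>"
    using segC[OF L] by blast
  have xO: "x \<in> \<Omega>" using xy AO by auto
  show ?thesis
  proof (cases "y \<in> frontier \<Omega>")
    case True
    have "L \<inter> frontier \<Omega> = {y}"
    proof
      show "{y} \<subseteq> L \<inter> frontier \<Omega>" using True xy by auto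
      show "L \<inter> frontier \<Omega> \<subseteq> {y}"
      proof
        fix q assume q: "q \<in> L \<inter> frontier \<Omega>"
        show "q \<in> {y}"
        proof (rule ccontr)
          assume "q \<notin> {y}"
          hence "dist q y > 0" by simp
          moreover have "dist x y = dist x q + dist q y" using q xy(2) by (simp add: seg_dist)
          moreover have "dist x y = dist x (nb x)" using bnd_seg[OF L xy(2) xy(3) True] .
          moreover have "dist x (nb x) \<le> dist x q" using nb(2)[OF xO] q by blast
          ultimately show False by linarith
        qed
      qed
    qed
    moreover have "seg_endpoint y L" using seg_endpoint_iff[OF xy(1)] xy(2) by blast
    ultimately show ?thesis by blast
  next
    case False
    hence yA: "y \<in> A" using xy by auto
    hence yO: "y \<in> \<Omega>" using AO by auto
    show ?thesis
    proof (rule ccontr)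
      assume "\<not> ?thesis"
      then obtain q where q: "q \<in> L" "q \<in> frontier \<Omega>" by blast
      have qx: "q \<noteq> x" and qy: "q \<noteq> y" using q xy yA F_A by auto
      let ?Ns = "[closed_segment x (nb x), closed_segment y (nb y)]"
      have "(\<Sum>L\<in>{L}. diameter L) \<le> sum_list (map diameter ?Ns)"
      proof (rule exchange)
        show "{L} \<subseteq> C" using L by auto
        show "\<forall>N\<in>set ?Ns. valid N" using valid_nb[OF xy(3)] valid_nb[OF yA] by simp
        show "\<forall>x'\<in>A. odd (cnt x' {L}) \<longleftrightarrow> np x' ?Ns"
        proof
          fix x' assume x': "x' \<in> A"
          have "odd (cnt x' {L}) \<longleftrightarrow> (x' = x \<or> x' = y)"
            using cnt1[of x' L] seg_endpoint_iff[OF xy(1)] xy(2) by simp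
          moreover have "np x' ?Ns \<longleftrightarrow> ((x' = x) \<noteq> (x' = y))"
            using ep_nb[OF xy(3) x'] ep_nb[OF yA x'] by simp
          ultimately show "odd (cnt x' {L}) \<longleftrightarrow> np x' ?Ns" using xy(1) by blast
        qed
      qed
      hence "dist x y \<le> dist x (nb x) + dist y (nb y)" using xy(2) by (simp add: diam_seg)
      moreover have "dist x y = dist x q + dist q y" using q xy(2) by (simp add: seg_dist)
      moreover have "dist x (nb x) \<le> dist x q" using nb(2)[OF xO q(2)] .
      moreover have "dist y (nb y) \<le> dist y q" using nb(2)[OF yO q(2)] .
      ultimately have "dist x q = dist x (nb x)" "dist y q = dist y (nb y)"
        using dist_commute[of q y] by linarith+
      hence bx: "ball x (dist x q) \<subseteq> \<Omega>" and byy: "ball y (dist y q) \<subseteq> \<Omega>"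
        using ball_nb[OF xO] ball_nb[OF yO] by simp_all
      have qs: "q \<in> closed_segment x y" using q(1) xy(2) by simp
      show False by (rule tangent_contra[OF bx byy qs qx qy q(2)])
    qed
  qed
qed

end

theorem lemma1p6:
  fixes \<Omega> A :: "complex set" and C :: "complex set set"
  assumes "bounded \<Omega>" and "simply_connected \<Omega>" and "C1_domain \<Omega>"
    and "finite A" and "A \<subseteq> \<Omega>"
    and "is_minimal_connection \<Omega> A C"
  shows "(\<forall>L1 \<in> C. \<forall>L2 \<in> C. L1 \<noteq> L2 \<longrightarrow> L1 \<inter> L2 = {})
    \<and> (\<forall>a \<in> A. \<exists>!L. L \<in> C \<and> seg_endpoint a L)
    \<and> (\<forall>L \<in> C. L \<inter> frontier \<Omega> = {} \<or> (\<exists>e. seg_endpoint e L \<and> L \<inter> frontier \<Omega> = {e}))"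
proof -
  interpret mcx \<Omega> A C using assms by unfold_locales auto
  show ?thesis
  proof (intro conjI ballI impI)
    fix L1 L2 assume h: "L1 \<in> C" "L2 \<in> C" "L1 \<noteq> L2"
    show "L1 \<inter> L2 = {}"
    proof (rule ccontr)
      assume "L1 \<inter> L2 \<noteq> {}"
      then obtain p where "p \<in> L1" "p \<in> L2" by blast
      thus False using disj[OF h] by blast
    qed
  next
    fix a assume "a \<in> A"
    thus "\<exists>!L. L \<in> C \<and> seg_endpoint a L" by (rule uniq)
  next
    fix L assume "L \<in> C"
    thus "L \<inter> frontier \<Omega> = {} \<or> (\<exists>e. seg_endpoint e L \<and> L \<inter> frontier \<Omega> = {e})"
      by (rule bdry)
  qed
qed

end
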